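(* For every $k \in \mathbb{N}$ and every minimally unsatisfiable clause-set $F$ with $\delta(F) \le k$ and $F \neq \{\bot\}$ we have $\mathrm{minvdeg}(F) \le \mathrm{N}(k)$. More precisely, there exists a variable $v \in \mathrm{var}(F)$ with $\mathrm{vdeg}_F(v) \le \mathrm{N}(k)$ and $\mathrm{ld}_F(v) \le k$, $\mathrm{ld}_F(\overline{v}) \le k$.
   Context: Literals come with a fixed-point-free involution $x \mapsto \overline{x}$ (complementation); variables are the positive literals, and $\mathrm{var}(x)$ is the underlying variable of a literal $x$. A clause is a finite set $C$ of literals with $C \cap \overline{C} = \emptyset$, where $\overline{L} = \{\overline{x} : x \in L\}$; a clause-set is a finite set of clauses. $\bot$ is the empty clause. For a clause-set $F$: $\mathrm{var}(F)$ is the set of variables occurring in $F$, $n(F) = |\mathrm{var}(F)|$, $c(F) = |F|$, and the deficiency is $\delta(F) = c(F) - n(F)$. A partial assignment is a map $\varphi : V \to \{0,1\}$ for a finite set $V$ of variables, extended to literals by $\varphi(\overline{v}) = 1 - \varphi(v)$; $F$ is satisfiable iff there is a partial assignment $\varphi$ such that every clause of $F$ contains a literal $x$ with $\varphi(x) = 1$. $F$ is minimally unsatisfiable if $F$ is unsatisfiable and $F \setminus \{C\}$ is satisfiable for every $C \in F$. The literal degree $\mathrm{ld}_F(x)$ is the number of clauses of $F$ containing $x$; the variable degree is $\mathrm{vdeg}_F(v) = \mathrm{ld}_F(v) + \mathrm{ld}_F(\overline{v})$; $\mathrm{minvdeg}(F) = \min_{v \in \mathrm{var}(F)} \mathrm{vdeg}_F(v)$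 if $n(F) > 0$ and $+\infty$ otherwise. The function $\mathrm{N} : \mathbb{N} \to \mathbb{N}$ (non-Mersenne numbers) is defined recursively by $\mathrm{N}(1) = 2$ and, for $k \ge 2$, $\mathrm{N}(k) = \max_{i \in \{2,\dots,k\}} \min(2i, \mathrm{N}(k-i+1) + i)$. Here $\mathbb{N} = \{1,2,\dots\}$. *)

theory Defs
  imports Main "HOL-Library.Extended_Nat"
begin

datatype 'v lit = Pos 'v | Neg 'v

fun comp :: "'v lit \<Rightarrow> 'v lit" where
  "comp (Pos v) = Neg v"
| "comp (Neg v) = Pos v"

fun var :: "'v lit \<Rightarrow> 'v" where
  "var (Pos v) = v"
| "var (Neg v) = v"

definition is_clause :: "'v lit set \<Rightarrow> bool" where
  "is_clause C \<longleftrightarrow> finite C \<and> C \<inter> comp ` C = {}"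

definition is_clause_set :: "'v lit set set \<Rightarrow> bool" where
  "is_clause_set F \<longleftrightarrow> finite F \<and> (\<forall>C\<in>F. is_clause C)"

definition vars :: "'v lit set set \<Rightarrow> 'v set" where
  "vars F = var ` (\<Union>F)"

definition deficiency :: "'v lit set set \<Rightarrow> int" where
  "deficiency F = int (card F) - int (card (vars F))"

fun lit_val :: "('v \<rightharpoonup> bool) \<Rightarrow> 'v lit \<Rightarrow> bool option" where
  "lit_val \<phi> (Pos v) = \<phi> v"
| "lit_val \<phi> (Neg v) = map_option Not (\<phi> v)"

definition satisfiable :: "'v lit set set \<Rightarrow> bool" where
  "satisfiable F \<longleftrightarrow> (\<exists>\<phi>. finite (dom \<phi>) \<and> (\<forall>C\<in>F. \<exists>x\<in>C. lit_val \<phi> x = Some True))"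

definition min_unsat :: "'v lit set set \<Rightarrow> bool" where
  "min_unsat F \<longleftrightarrow> is_clause_set F \<and> \<not> satisfiable F \<and> (\<forall>C\<in>F. satisfiable (F - {C}))"

definition ld :: "'v lit set set \<Rightarrow> 'v lit \<Rightarrow> nat" where
  "ld F x = card {C \<in> F. x \<in> C}"

definition vdeg :: "'v lit set set \<Rightarrow> 'v \<Rightarrow> nat" where
  "vdeg F v = ld F (Pos v) + ld F (Neg v)"

definition minvdeg :: "'v lit set set \<Rightarrow> enat" where
  "minvdeg F = (if vars F = {} then \<infinity> else enat (Min (vdeg F ` vars F)))"

text \<open>Non-Mersenne numbers; only meaningful for k \<ge> 1 (the value at 0 is a dummy).\<close>
function NM :: "nat \<Rightarrow> nat" where
  "NM k = (if k \<le> 1 then 2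
           else Max ((\<lambda>i. min (2 * i) (NM (k - i + 1) + i)) ` {2..k}))"
  by auto
termination
  by (relation "measure id") auto

end

theory Submission
  imports Defs
begin


declare NM.simps[simp del]

fun tv :: "'v lit \<Rightarrow> bool" where
  "tv (Pos v) = True" | "tv (Neg v) = False"

definition val :: "('v \<Rightarrow> bool) \<Rightarrow> 'v lit \<Rightarrow> bool" where
  "val \<alpha> x \<longleftrightarrow> \<alpha> (var x) = tv x"

definition tsat :: "('v \<Rightarrow> bool) \<Rightarrow> 'v lit set set \<Rightarrow> bool" where
  "tsat \<alpha> F \<longleftrightarrow> (\<forall>C\<in>F. \<exists>x\<in>C. val \<alpha> x)"

lemma var_comp[simp]: "var (comp x) = var x" by (cases x) auto
lemma tv_comp[simp]: "tv (comp x) = (\<not> tv x)" by (cases x) auto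
lemma comp_comp[simp]: "comp (comp x) = x" by (cases x) auto
lemma comp_neq[simp]: "comp x \<noteq> x" by (cases x) auto
lemma comp_neq'[simp]: "x \<noteq> comp x" by (cases x) auto
lemma val_comp[simp]: "val \<alpha> (comp x) = (\<not> val \<alpha> x)"
  unfolding val_def by (cases x) auto
lemma same_var: "var y = var x \<Longrightarrow> y = x \<or> y = comp x"
  by (cases x; cases y) auto
lemma lit_eq: "var y = var x \<Longrightarrow> tv y = tv x \<Longrightarrow> y = x"
  by (cases x; cases y) auto

lemma finite_vars: "is_clause_set F \<Longrightarrow> finite (vars F)"
  unfolding is_clause_set_def is_clause_def vars_def by auto

lemma sat_iff:
  assumes "is_clause_set F"
  shows "satisfiable F \<longleftrightarrow> (\<exists>\<alpha>. tsat \<alpha> F)"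
proof
  assume "satisfiable F"
  then obtain \<phi> where ph: "\<forall>C\<in>F. \<exists>x\<in>C. lit_val \<phi> x = Some True"
    unfolding satisfiable_def by blast
  have "tsat (\<lambda>v. \<phi> v = Some True) F"
    unfolding tsat_def
  proof
    fix C assume "C \<in> F"
    then obtain x where "x \<in> C" "lit_val \<phi> x = Some True" using ph by blast
    moreover have "val (\<lambda>v. \<phi> v = Some True) x" using \<open>lit_val \<phi> x = Some True\<close>
      by (cases x) (auto simp: val_def)
    ultimately show "\<exists>x\<in>C. val (\<lambda>v. \<phi> v = Some True) x" by blast
  qed
  then show "\<exists>\<alpha>. tsat \<alpha> F" by blast
next
  assume "\<exists>\<alpha>. tsat \<alpha> F"
  then obtain \<alpha> where a: "tsat \<alpha> F" by blast
  define \<phi> where "\<phi> = (\<lambda>v. if v \<in> vars F then Some (\<alpha> v) else None)"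
  have "dom \<phi> \<subseteq> vars F" unfolding \<phi>_def by (auto split: if_splits)
  then have fin: "finite (dom \<phi>)" using finite_vars[OF assms] finite_subset by blast
  have "\<forall>C\<in>F. \<exists>x\<in>C. lit_val \<phi> x = Some True"
  proof
    fix C assume C: "C \<in> F"
    then obtain x where x: "x \<in> C" "val \<alpha> x" using a unfolding tsat_def by blast
    have "var x \<in> vars F" using C x unfolding vars_def by auto
    then have "lit_val \<phi> x = Some True" using x(2)
      by (cases x) (auto simp: val_def \<phi>_def)
    then show "\<exists>x\<in>C. lit_val \<phi> x = Some True" using x by blast
  qed
  then show "satisfiable F" unfolding satisfiable_def using fin by blast
qed

lemma NM_le1: "k \<le> 1 \<Longrightarrow> NM k = 2"
  by (subst NM.simps) simp

lemma NM_gt1: "k > 1 \<Longrightarrow> NM k = Max ((\<lambda>i. min (2 * i) (NM (k - i + 1) + i)) ` {2..k})"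
  by (subst NM.simps) simp

lemma NM_ge_term: "2 \<le> i \<Longrightarrow> i \<le> k \<Longrightarrow> min (2 * i) (NM (k - i + 1) + i) \<le> NM k"
  by (subst NM_gt1) (auto intro!: Max_ge)

lemma NM_ge2: "NM k \<ge> 2"
proof (cases "k \<le> 1")
  case True then show ?thesis by (simp add: NM_le1)
next
  case False
  have "min (2 * 2) (NM (k - 2 + 1) + 2) \<le> NM k" using False by (intro NM_ge_term) auto
  then show ?thesis by linarith
qed

lemma NM_Suc: "NM k \<le> NM (Suc k)"
proof (induction k rule: less_induct)
  case (less k)
  show ?case
  proof (cases "k \<le> 1")
    case True then show ?thesis using NM_ge2[of "Suc k"] by (simp add: NM_le1)
  next
    case False
    have "min (2 * i) (NM (k - i + 1) + i) \<le> NM (Suc k)" if "i \<in> {2..k}" for i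
    proof -
      have "NM (k - i + 1) \<le> NM (Suc (k - i + 1))" using less that by auto
      moreover have "Suc (k - i + 1) = Suc k - i + 1" using that by auto
      ultimately have "min (2 * i) (NM (k - i + 1) + i) \<le> min (2 * i) (NM (Suc k - i + 1) + i)"
        by simp
      also have "\<dots> \<le> NM (Suc k)" using that by (intro NM_ge_term) auto
      finally show ?thesis .
    qed
    then show ?thesis using False by (subst NM_gt1) auto
  qed
qed

lemma NM_mono: "k \<le> k' \<Longrightarrow> NM k \<le> NM k'"
  using lift_Suc_mono_le[of NM, OF NM_Suc] by blast




definition cla :: "'v lit set \<Rightarrow> bool" where "cla C \<longleftrightarrow> True"

lemma vars_mono: "G \<subseteq> F \<Longrightarrow> vars G \<subseteq> vars F" unfolding vars_def by auto
lemma vars_Un: "vars (G \<union> H) = vars G \<union> vars H" unfolding vars_def by auto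
lemma vars_finite: "finite F \<Longrightarrow> \<forall>C\<in>F. finite C \<Longrightarrow> finite (vars F)"
  unfolding vars_def by auto

lemma hall_sat:
  "finite F \<Longrightarrow> \<forall>C\<in>F. finite C \<Longrightarrow> (\<forall>G\<subseteq>F. card G \<le> card (vars G)) \<Longrightarrow> \<exists>\<alpha>. tsat \<alpha> F"
proof (induction "card F" arbitrary: F rule: less_induct)
  case less
  note fin = less.prems(1) and finC = less.prems(2) and hall = less.prems(3)
  show ?case
  proof (cases "F = {}")
    case True then show ?thesis by (simp add: tsat_def)
  next
    case Fne: False
    show ?thesis
    proof (cases "\<forall>G\<subseteq>F. G \<noteq> {} \<and> G \<noteq> F \<longrightarrow> card G < card (vars G)")
      case True
      obtain C where C: "C \<in> F" using Fne by blast
      have "card {C} \<le> card (vars {C})" using hall C by blast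
      then have "vars {C} \<noteq> {}" by auto
      then obtain y where y: "y \<in> C" unfolding vars_def by auto
      define \<rho> where "\<rho> = (\<lambda>D. {z \<in> D. var z \<noteq> var y})"
      define F' where "F' = \<rho> ` (F - {C})"
      have finF': "finite F'" using fin unfolding F'_def by auto
      have cardF': "card F' < card F"
      proof -
        have "card F' \<le> card (F - {C})" unfolding F'_def using fin by (intro card_image_le) auto
        also have "\<dots> < card F" using fin C by (rule card_Diff1_less)
        finally show ?thesis .
      qed
      have finC': "\<forall>D\<in>F'. finite D" using finC unfolding F'_def \<rho>_def by auto
      have hall': "\<forall>G'\<subseteq>F'. card G' \<le> card (vars G')"
      proof (intro allI impI)
        fix G' assume G': "G' \<subseteq> F'"
        then obtain G where G: "G \<subseteq> F - {C}" "inj_on \<rho> G" "G' = \<rho> ` G"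
          unfolding F'_def by (auto simp: subset_image_inj)
        show "card G' \<le> card (vars G')"
        proof (cases "G = {}")
          case True then show ?thesis using G by simp
        next
          case False
          have finG: "finite G" using G(1) fin finite_subset by blast
          have lt: "card G < card (vars G)" using True G(1) False C by blast
          have sub: "vars G - {var y} \<subseteq> vars G'"
            unfolding G(3) vars_def \<rho>_def by auto
          have finVG': "finite (vars G')" using G' finF' finC'
            by (intro vars_finite) (auto intro: finite_subset)
          have "card (vars G) - 1 \<le> card (vars G - {var y})"
            using diff_card_le_card_Diff[of "{var y}" "vars G"] by simp
          also have "\<dots> \<le> card (vars G')" using sub finVG' by (rule card_mono[rotated])
          finally have "card G \<le> card (vars G')" using lt by linarith
          then show ?thesis using G(2,3) by (simp add: card_image)
        qed
      qed
      obtain \<alpha> where \<alpha>: "tsat \<alpha> F'" using less.hyps[OF cardF' finF' finC' hall'] by blast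
      define \<beta> where "\<beta> = \<alpha>(var y := tv y)"
      have "tsat \<beta> F" unfolding tsat_def
      proof
        fix D assume D: "D \<in> F"
        show "\<exists>x\<in>D. val \<beta> x"
        proof (cases "D = C")
          case True then show ?thesis using y by (intro bexI[of _ y]) (auto simp: \<beta>_def val_def)
        next
          case False
          then have "\<rho> D \<in> F'" using D unfolding F'_def by auto
          then obtain z where "z \<in> \<rho> D" "val \<alpha> z" using \<alpha> unfolding tsat_def by blast
          then show ?thesis unfolding \<rho>_def \<beta>_def val_def by auto
        qed
      qed
      then show ?thesis by blast
    next
      case False
      then obtain G where G0: "G \<subseteq> F" "G \<noteq> {}" "G \<noteq> F" "\<not> card G < card (vars G)" by blast
      then have G: "G \<subseteq> F" "G \<noteq> {}" "G \<noteq> F" "card (vars G) \<le> card G" by auto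
      have finG: "finite G" using G(1) fin finite_subset by blast
      have cardG: "card G < card F" using G fin by (simp add: psubset_card_mono psubsetI)
      obtain \<alpha>1 where a1: "tsat \<alpha>1 G"
        using less.hyps[OF cardG finG] finC hall G(1) by blast
      define V where "V = vars G"
      define \<rho> where "\<rho> = (\<lambda>D. {z \<in> D. var z \<notin> V})"
      define F' where "F' = \<rho> ` (F - G)"
      have finF': "finite F'" using fin unfolding F'_def by auto
      have cardF': "card F' < card F"
      proof -
        have "card F' \<le> card (F - G)" unfolding F'_def using fin by (intro card_image_le) auto
        also have "\<dots> = card F - card G" by (rule card_Diff_subset[OF finG G(1)])
        also have "\<dots> < card F"
        proof -
          have "card G > 0" using finG G(2) by (simp add: card_gt_0_iff)
          then show ?thesis using cardG by linarith
        qed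
        finally show ?thesis .
      qed
      have finC': "\<forall>D\<in>F'. finite D" using finC unfolding F'_def \<rho>_def by auto
      have hall': "\<forall>H'\<subseteq>F'. card H' \<le> card (vars H')"
      proof (intro allI impI)
        fix H' assume H': "H' \<subseteq> F'"
        then obtain H where H: "H \<subseteq> F - G" "inj_on \<rho> H" "H' = \<rho> ` H"
          unfolding F'_def by (auto simp: subset_image_inj)
        have finH: "finite H" using H(1) fin finite_subset by blast
        have "G \<union> H \<subseteq> F" using G(1) H(1) by blast
        then have "card (G \<union> H) \<le> card (vars (G \<union> H))" using hall by blast
        moreover have "card (G \<union> H) = card G + card H" using H(1) finG finH
          by (intro card_Un_disjoint) auto
        moreover have "vars (G \<union> H) \<subseteq> V \<union> vars H'"
          unfolding V_def H(3) vars_def \<rho>_def by auto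
        moreover have "finite (vars H')" using H' finF' finC'
            by (intro vars_finite) (auto intro: finite_subset)
        moreover have "finite V" unfolding V_def using finG finC G(1) by (intro vars_finite) auto
        ultimately have "card G + card H \<le> card V + card (vars H')"
          by (metis (no_types, lifting) card_Un_le card_mono finite_UnI le_trans)
        moreover have "card V \<le> card G" using G(4) V_def by simp
        ultimately have "card H \<le> card (vars H')" by linarith
        then show "card H' \<le> card (vars H')" using H by (simp add: card_image)
      qed
      obtain \<alpha>2 where a2: "tsat \<alpha>2 F'" using less.hyps[OF cardF' finF' finC' hall'] by blast
      define \<beta> where "\<beta> = (\<lambda>v. if v \<in> V then \<alpha>1 v else \<alpha>2 v)"
      have "tsat \<beta> F" unfolding tsat_def
      proof
        fix D assume D: "D \<in> F"
        show "\<exists>x\<in>D. val \<beta> x"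
        proof (cases "D \<in> G")
          case True
          then obtain z where z: "z \<in> D" "val \<alpha>1 z" using a1 unfolding tsat_def by blast
          then have "var z \<in> V" using True unfolding V_def vars_def by auto
          then show ?thesis using z by (auto simp: \<beta>_def val_def)
        next
          case False
          then have "\<rho> D \<in> F'" using D unfolding F'_def by auto
          then obtain z where "z \<in> \<rho> D" "val \<alpha>2 z" using a2 unfolding tsat_def by blast
          then show ?thesis unfolding \<rho>_def \<beta>_def val_def by auto
        qed
      qed
      then show ?thesis by blast
    qed
  qed
qed




lemma mu_cs: "min_unsat F \<Longrightarrow> is_clause_set F" unfolding min_unsat_def by blast

lemma cs_subset: "is_clause_set F \<Longrightarrow> G \<subseteq> F \<Longrightarrow> is_clause_set G"
  unfolding is_clause_set_def by (auto intro: finite_subset)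

lemma mu_unsat: "min_unsat F \<Longrightarrow> \<not> tsat \<alpha> F"
  using sat_iff[OF mu_cs] unfolding min_unsat_def by blast

lemma mu_falsify:
  assumes "min_unsat F" "C \<in> F"
  shows "\<exists>\<alpha>. tsat \<alpha> (F - {C}) \<and> (\<forall>x\<in>C. \<not> val \<alpha> x)"
proof -
  have "satisfiable (F - {C})" using assms unfolding min_unsat_def by blast
  then obtain \<alpha> where a: "tsat \<alpha> (F - {C})"
    using sat_iff[OF cs_subset[OF mu_cs[OF assms(1)], of "F - {C}"]] by blast
  have "\<forall>x\<in>C. \<not> val \<alpha> x"
  proof (rule ccontr)
    assume "\<not> (\<forall>x\<in>C. \<not> val \<alpha> x)"
    then have "tsat \<alpha> F" using a unfolding tsat_def by blast
    then show False using mu_unsat[OF assms(1)] by blast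
  qed
  then show ?thesis using a by blast
qed

lemma mu_no_empty: "min_unsat F \<Longrightarrow> F \<noteq> {{}} \<Longrightarrow> {} \<notin> F"
proof
  assume mu: "min_unsat F" and ne: "F \<noteq> {{}}" and e: "{} \<in> F"
  have "\<exists>C\<in>F. C \<noteq> {}"
  proof (rule ccontr)
    assume "\<not> (\<exists>C\<in>F. C \<noteq> {})"
    then have "F \<subseteq> {{}}" by blast
    then have "F = {{}}" using e by blast
    then show False using ne by blast
  qed
  then obtain C where C: "C \<in> F" "C \<noteq> {}" by blast
  obtain \<alpha> where "tsat \<alpha> (F - {C})" using mu_falsify[OF mu C(1)] by blast
  then show False using e C unfolding tsat_def by auto
qed

lemma mu_nosub: "min_unsat F \<Longrightarrow> C \<in> F \<Longrightarrow> D \<in> F \<Longrightarrow> C \<subseteq> D \<Longrightarrow> C = D"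
proof (rule ccontr)
  assume mu: "min_unsat F" and C: "C \<in> F" and D: "D \<in> F" and sub: "C \<subseteq> D" and ne: "C \<noteq> D"
  obtain \<alpha> where a: "tsat \<alpha> (F - {D})" using mu_falsify[OF mu D] by blast
  then obtain x where "x \<in> C" "val \<alpha> x" using C ne unfolding tsat_def by blast
  then have "tsat \<alpha> F" using a sub unfolding tsat_def by blast
  then show False using mu_unsat[OF mu] by blast
qed

lemma clause_nocomp: "is_clause C \<Longrightarrow> x \<in> C \<Longrightarrow> comp x \<notin> C"
proof
  assume a: "is_clause C" "x \<in> C" "comp x \<in> C"
  have "comp x \<in> comp ` C" using a(2) by (rule imageI)
  then show False using a unfolding is_clause_def by blast
qed

lemma mu_clause: "min_unsat F \<Longrightarrow> C \<in> F \<Longrightarrow> is_clause C"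
  using mu_cs unfolding is_clause_set_def by blast

lemma mu_nopure:
  assumes mu: "min_unsat F" and C: "C \<in> F" and x: "x \<in> C"
  shows "\<exists>D\<in>F. comp x \<in> D"
proof (rule ccontr)
  assume np: "\<not> (\<exists>D\<in>F. comp x \<in> D)"
  obtain \<alpha> where a: "tsat \<alpha> (F - {C})" using mu_falsify[OF mu C] by blast
  define \<beta> where "\<beta> = \<alpha>(var x := tv x)"
  have "tsat \<beta> F" unfolding tsat_def
  proof
    fix D assume D: "D \<in> F"
    show "\<exists>z\<in>D. val \<beta> z"
    proof (cases "x \<in> D")
      case True then show ?thesis by (intro bexI[of _ x]) (auto simp: \<beta>_def val_def)
    next
      case False
      then have "D \<noteq> C" using x by blast
      then obtain z where z: "z \<in> D" "val \<alpha> z" using a D unfolding tsat_def by blast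
      have "var z \<noteq> var x"
      proof
        assume "var z = var x"
        then have "z = x \<or> z = comp x" by (rule same_var)
        then show False using z False np D by blast
      qed
      then show ?thesis using z by (auto simp: \<beta>_def val_def)
    qed
  qed
  then show False using mu_unsat[OF mu] by blast
qed

definition defi :: "'v lit set set \<Rightarrow> int" where
  "defi G = int (card G) - int (card (vars G))"

lemma defi_eq: "deficiency G = defi G" unfolding deficiency_def defi_def by simp

lemma tarsi:
  assumes mu: "min_unsat F" and G: "G \<subseteq> F" "G \<noteq> F"
  shows "deficiency G < deficiency F"
proof -
  have cs: "is_clause_set F" using mu_cs[OF mu] .
  then have fin: "finite F" and finC: "\<forall>C\<in>F. finite C"
    unfolding is_clause_set_def is_clause_def by auto
  define M where "M = Max (defi ` Pow F)"
  have finD: "finite (defi ` Pow F)" using fin by simp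
  have Mge: "defi G' \<le> M" if "G' \<subseteq> F" for G' unfolding M_def using finD that by (intro Max_ge) auto
  have key: "G' = F" if G': "G' \<subseteq> F" "defi G' = M" for G'
  proof (rule ccontr)
    assume ne: "G' \<noteq> F"
    have "G' \<subset> F" using G'(1) ne by (rule psubsetI)
    then obtain C where "C \<in> F - G'" using psubset_imp_ex_mem by blast
    then have C: "C \<in> F" "C \<notin> G'" by auto
    obtain \<alpha>1 where a1: "tsat \<alpha>1 (F - {C})" using mu_falsify[OF mu C(1)] by blast
    then have a1': "tsat \<alpha>1 G'" using G' C unfolding tsat_def by blast
    have finG: "finite G'" using G'(1) fin finite_subset by blast
    define V where "V = vars G'"
    have finV: "finite V" unfolding V_def using finG finC G'(1) by (intro vars_finite) auto
    define \<rho> where "\<rho> = (\<lambda>D. {z \<in> D. var z \<notin> V})"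
    define F' where "F' = \<rho> ` (F - G')"
    have finF': "finite F'" using fin unfolding F'_def by auto
    have finC': "\<forall>D\<in>F'. finite D" using finC unfolding F'_def \<rho>_def by auto
    have hall': "\<forall>H'\<subseteq>F'. card H' \<le> card (vars H')"
    proof (intro allI impI)
      fix H' assume H': "H' \<subseteq> F'"
      then obtain H where H: "H \<subseteq> F - G'" "inj_on \<rho> H" "H' = \<rho> ` H"
        unfolding F'_def by (auto simp: subset_image_inj)
      have finH: "finite H" using H(1) fin finite_subset by blast
      have "defi (G' \<union> H) \<le> M" using G'(1) H(1) by (intro Mge) auto
      have cu: "card (G' \<union> H) = card G' + card H" using H(1) finG finH
        by (intro card_Un_disjoint) auto
      have sub: "vars (G' \<union> H) \<subseteq> V \<union> vars H'"
        unfolding V_def H(3) vars_def \<rho>_def by auto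
      have fH': "finite (vars H')" using H' finF' finC'
          by (intro vars_finite) (auto intro: finite_subset)
      have "card (vars (G' \<union> H)) \<le> card (V \<union> vars H')"
        using sub finV fH' by (intro card_mono) auto
      also have "\<dots> \<le> card V + card (vars H')" by (rule card_Un_le)
      finally have cv: "card (vars (G' \<union> H)) \<le> card V + card (vars H')" .
      have dM: "defi (G' \<union> H) \<le> M" by fact
      have e1: "defi (G' \<union> H) = int (card G') + int (card H) - int (card (vars (G' \<union> H)))"
        unfolding defi_def cu by simp
      have e2: "M = int (card G') - int (card V)" using G'(2) unfolding defi_def V_def by simp
      have "int (card (vars (G' \<union> H))) \<le> int (card V) + int (card (vars H'))" using cv by linarith
      then have "card H \<le> card (vars H')" using dM e1 e2 by linarith
      then show "card H' \<le> card (vars H')" using H by (simp add: card_image)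
    qed
    obtain \<alpha>2 where a2: "tsat \<alpha>2 F'" using hall_sat[OF finF' finC' hall'] by blast
    define \<beta> where "\<beta> = (\<lambda>v. if v \<in> V then \<alpha>1 v else \<alpha>2 v)"
    have "tsat \<beta> F" unfolding tsat_def
    proof
      fix D assume D: "D \<in> F"
      show "\<exists>x\<in>D. val \<beta> x"
      proof (cases "D \<in> G'")
        case True
        then obtain z where z: "z \<in> D" "val \<alpha>1 z" using a1' unfolding tsat_def by blast
        then have "var z \<in> V" using True unfolding V_def vars_def by auto
        then show ?thesis using z by (auto simp: \<beta>_def val_def)
      next
        case False
        then have "\<rho> D \<in> F'" using D unfolding F'_def by auto
        then obtain z where "z \<in> \<rho> D" "val \<alpha>2 z" using a2 unfolding tsat_def by blast
        then show ?thesis unfolding \<rho>_def \<beta>_def val_def by auto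
      qed
    qed
    then show False using mu_unsat[OF mu] by blast
  qed
  have "M \<in> defi ` Pow F" unfolding M_def using finD by (intro Max_in) auto
  then obtain G0 where G0: "G0 \<subseteq> F" "defi G0 = M" by auto
  have "G0 = F" using key[OF G0] .
  then have dF: "defi F = M" using G0(2) by simp
  have dG: "defi G \<noteq> M"
  proof
    assume "defi G = M"
    then have "G = F" using key[OF G(1)] by simp
    then show False using G(2) by simp
  qed
  have "defi G < defi F" using Mge[OF G(1)] dF dG by simp
  then show ?thesis by (simp add: defi_eq)
qed

lemma tarsi1: "min_unsat F \<Longrightarrow> deficiency F \<ge> 1"
proof -
  assume mu: "min_unsat F"
  have "F \<noteq> {}" using mu_unsat[OF mu] unfolding tsat_def by blast
  then have "{} \<noteq> F" by simp
  have "deficiency (F \<inter> {}) < deficiency F"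
  proof (rule tarsi[OF mu])
    show "F \<inter> {} \<subseteq> F" by simp
    show "F \<inter> {} \<noteq> F" using \<open>{} \<noteq> F\<close> by simp
  qed
  then show ?thesis by (simp add: deficiency_def vars_def)
qed




definition cand :: "'v lit set set \<Rightarrow> 'v lit set set \<Rightarrow> bool" where
  "cand F S \<longleftrightarrow> min_unsat S \<and> vars S = vars F \<and> (\<exists>f. bij_betw f F S \<and> (\<forall>C\<in>F. C \<subseteq> f C))"

definition weight :: "'v lit set set \<Rightarrow> nat" where
  "weight S = (\<Sum>D\<in>S. card D)"

definition lits :: "'v set \<Rightarrow> 'v lit set" where
  "lits V = Pos ` V \<union> Neg ` V"

lemma lit_in_lits: "var z \<in> V \<Longrightarrow> z \<in> lits V"
  unfolding lits_def by (cases z) auto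

lemma cand_card: "cand F S \<Longrightarrow> card S = card F"
  unfolding cand_def using bij_betw_same_card by metis

lemma cand_weight_bound:
  assumes "cand F S" "min_unsat F"
  shows "weight S \<le> card F * card (lits (vars F))"
proof -
  have fV: "finite (lits (vars F))" using finite_vars[OF mu_cs[OF assms(2)]] unfolding lits_def by auto
  have "card D \<le> card (lits (vars F))" if "D \<in> S" for D
  proof -
    have "D \<subseteq> lits (vars F)"
    proof
      fix z assume "z \<in> D"
      then have "var z \<in> vars S" using that unfolding vars_def by auto
      then show "z \<in> lits (vars F)" using assms(1) unfolding cand_def by (auto intro: lit_in_lits)
    qed
    then show ?thesis using fV card_mono by blast
  qed
  then have "weight S \<le> card S * card (lits (vars F))"
    unfolding weight_def using sum_bounded_above[of S card "card (lits (vars F))"] by simp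
  then show ?thesis using cand_card[OF assms(1)] by simp
qed

lemma sat_exists:
  assumes mu: "min_unsat F"
  shows "\<exists>S. cand F S \<and> (\<forall>S'. cand F S' \<longrightarrow> weight S' \<le> weight S)"
proof -
  define W where "W = weight ` {S. cand F S}"
  have "cand F F" unfolding cand_def using mu by (intro conjI exI[of _ id]) auto
  then have Wne: "W \<noteq> {}" unfolding W_def by blast
  have "W \<subseteq> {..card F * card (lits (vars F))}" unfolding W_def using cand_weight_bound mu by auto
  then have finW: "finite W" using finite_subset by blast
  have "Max W \<in> W" using finW Wne by (rule Max_in)
  then obtain S where S: "cand F S" "weight S = Max W" unfolding W_def by auto
  have "\<forall>S'. cand F S' \<longrightarrow> weight S' \<le> weight S"
    using S(2) finW unfolding W_def by auto
  then show ?thesis using S(1) by blast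
qed

lemma saturated:
  assumes cS: "cand F S" and mx: "\<forall>S'. cand F S' \<longrightarrow> weight S' \<le> weight S"
    and C: "C \<in> S" and y1: "var y \<in> vars S" and y2: "var y \<notin> var ` C"
  shows "\<exists>\<alpha>. tsat \<alpha> (S - {C}) \<and> (\<forall>x\<in>C. \<not> val \<alpha> x) \<and> val \<alpha> y"
proof (rule ccontr)
  assume nex: "\<not> ?thesis"
  have mu: "min_unsat S" using cS unfolding cand_def by blast
  have cs: "is_clause_set S" using mu_cs[OF mu] .
  have yC: "y \<notin> C" using y2 by blast
  have cyC: "comp y \<notin> C" using y2 by (metis image_eqI var_comp)
  define C' where "C' = insert y C"
  define S' where "S' = insert C' (S - {C})"
  have C'notin: "C' \<notin> S - {C}"
  proof
    assume "C' \<in> S - {C}"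
    then have "C = C'" using mu_nosub[OF mu C] unfolding C'_def by blast
    then have "y \<in> C" unfolding C'_def by (metis insertI1)
    then show False using yC by contradiction
  qed
  have isc: "is_clause C'"
  proof -
    have "is_clause C" using mu_clause[OF mu C] .
    then show ?thesis unfolding is_clause_def C'_def using yC cyC
      by (auto simp: clause_nocomp)
  qed
  have cs': "is_clause_set S'" using cs isc unfolding S'_def is_clause_set_def by auto
  have unsat: "\<not> tsat \<alpha> S'" for \<alpha>
  proof
    assume a: "tsat \<alpha> S'"
    then have a1: "tsat \<alpha> (S - {C})" unfolding S'_def tsat_def by blast
    show False
    proof (cases "\<exists>x\<in>C. val \<alpha> x")
      case True
      then have "tsat \<alpha> S" using a1 unfolding tsat_def by blast
      then show False using mu_unsat[OF mu] by blast
    next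
      case False
      obtain z where "z \<in> C'" "val \<alpha> z" using a unfolding S'_def tsat_def by blast
      then have "val \<alpha> y" using False unfolding C'_def by blast
      then show False using nex a1 False by blast
    qed
  qed
  have mu': "min_unsat S'" unfolding min_unsat_def
  proof (intro conjI ballI)
    show "is_clause_set S'" by (rule cs')
    show "\<not> satisfiable S'" using sat_iff[OF cs'] unsat by blast
  next
    fix D assume D: "D \<in> S'"
    have "\<exists>\<alpha>. tsat \<alpha> (S' - {D})"
    proof (cases "D = C'")
      case True
      then have "S' - {D} = S - {C}" unfolding S'_def using C'notin by auto
      then show ?thesis using mu_falsify[OF mu C] by auto
    next
      case False
      then have D2: "D \<in> S" "D \<noteq> C" using D unfolding S'_def by auto
      obtain \<alpha> where a: "tsat \<alpha> (S - {D})" using mu_falsify[OF mu D2(1)] by blast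
      have "tsat \<alpha> (S' - {D})" unfolding tsat_def
      proof
        fix E assume E: "E \<in> S' - {D}"
        show "\<exists>x\<in>E. val \<alpha> x"
        proof (cases "E = C'")
          case True
          obtain x where "x \<in> C" "val \<alpha> x" using a C D2 unfolding tsat_def by blast
          then show ?thesis using True unfolding C'_def by blast
        next
          case False
          then have "E \<in> S - {D}" using E unfolding S'_def by auto
          then show ?thesis using a unfolding tsat_def by blast
        qed
      qed
      then show ?thesis by blast
    qed
    then show "satisfiable (S' - {D})" using sat_iff[OF cs_subset[OF cs', of "S' - {D}"]] by blast
  qed
  have vS': "vars S' = vars S"
  proof -
    have "vars S' = var ` C' \<union> vars (S - {C})" unfolding S'_def vars_def by auto
    also have "\<dots> = vars S" using y1 C unfolding C'_def vars_def by auto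
    finally show ?thesis .
  qed
  define g where "g = (\<lambda>D. if D = C then C' else D)"
  have gbij: "bij_betw g S S'"
    unfolding bij_betw_def inj_on_def S'_def g_def using C C'notin by auto
  obtain f where f: "bij_betw f F S" "\<forall>E\<in>F. E \<subseteq> f E" using cS unfolding cand_def by blast
  have "cand F S'" unfolding cand_def
  proof (intro conjI exI[of _ "g \<circ> f"])
    show "min_unsat S'" by (rule mu')
    show "vars S' = vars F" using vS' cS unfolding cand_def by simp
    show "bij_betw (g \<circ> f) F S'" using f(1) gbij by (rule bij_betw_trans)
    show "\<forall>E\<in>F. E \<subseteq> (g \<circ> f) E" using f(2) unfolding g_def C'_def by auto
  qed
  then have "weight S' \<le> weight S" using mx by blast
  moreover have "weight S' = weight S + 1"
  proof -
    have finS: "finite S" using cs unfolding is_clause_set_def by blast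
    have fC: "finite C" using mu_clause[OF mu C] unfolding is_clause_def by blast
    have "weight S' = card C' + (\<Sum>D\<in>S - {C}. card D)"
      unfolding weight_def S'_def using finS C'notin by (simp add: sum.insert)
    also have "\<dots> = card C + 1 + (\<Sum>D\<in>S - {C}. card D)"
      unfolding C'_def using fC yC by simp
    also have "weight S = card C + (\<Sum>D\<in>S - {C}. card D)"
      unfolding weight_def using finS C by (simp add: sum.remove)
    ultimately show ?thesis by simp
  qed
  ultimately show False by simp
qed

lemma cand_ld:
  assumes "cand F S" shows "ld F y \<le> ld S y"
proof -
  obtain f where f: "bij_betw f F S" "\<forall>E\<in>F. E \<subseteq> f E" using assms unfolding cand_def by blast
  have mu: "min_unsat S" using assms unfolding cand_def by blast
  have fin: "finite S" using mu_cs[OF mu] unfolding is_clause_set_def by blast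
  have "inj_on f {C \<in> F. y \<in> C}" using f(1) unfolding bij_betw_def by (auto intro: inj_on_subset)
  moreover have "f ` {C \<in> F. y \<in> C} \<subseteq> {D \<in> S. y \<in> D}" using f unfolding bij_betw_def by auto
  ultimately show ?thesis unfolding ld_def using fin by (intro card_inj_on_le) auto
qed

lemma cand_vdeg: "cand F S \<Longrightarrow> vdeg F v \<le> vdeg S v"
  unfolding vdeg_def using cand_ld by (metis add_mono)

lemma cand_defi: "cand F S \<Longrightarrow> deficiency S = deficiency F"
  unfolding deficiency_def using cand_card unfolding cand_def by metis




definition occ :: "'v lit set set \<Rightarrow> 'v \<Rightarrow> 'v lit set set" where
  "occ S w = {C \<in> S. w \<in> var ` C}"

lemma clause_sub: "is_clause C \<Longrightarrow> D \<subseteq> C \<Longrightarrow> is_clause D"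
  unfolding is_clause_def by (auto intro: finite_subset)

lemma var_img: "(w \<in> var ` C) = (Pos w \<in> C \<or> Neg w \<in> C)"
proof
  assume "w \<in> var ` C"
  then obtain z where "z \<in> C" "w = var z" by blast
  then show "Pos w \<in> C \<or> Neg w \<in> C" by (cases z) auto
next
  assume "Pos w \<in> C \<or> Neg w \<in> C"
  then show "w \<in> var ` C"
  proof
    assume "Pos w \<in> C" then show ?thesis using image_eqI[of w var "Pos w" C] by simp
  next
    assume "Neg w \<in> C" then show ?thesis using image_eqI[of w var "Neg w" C] by simp
  qed
qed

lemma vdeg_occ:
  assumes cs: "is_clause_set S" shows "vdeg S w = card (occ S w)"
proof -
  have fin: "finite S" using cs unfolding is_clause_set_def by blast
  have "occ S w = {C \<in> S. Pos w \<in> C} \<union> {C \<in> S. Neg w \<in> C}"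
    unfolding occ_def var_img by auto
  moreover have "{C \<in> S. Pos w \<in> C} \<inter> {C \<in> S. Neg w \<in> C} = {}"
  proof -
    have "Neg w \<notin> C" if "C \<in> S" "Pos w \<in> C" for C
      using clause_nocomp[of C "Pos w"] cs that unfolding is_clause_set_def by auto
    then show ?thesis by auto
  qed
  ultimately show ?thesis unfolding vdeg_def ld_def using fin
    by (simp add: card_Un_disjoint)
qed

lemma ld_pos: "finite S \<Longrightarrow> C \<in> S \<Longrightarrow> y \<in> C \<Longrightarrow> ld S y \<ge> 1"
proof -
  assume a: "finite S" "C \<in> S" "y \<in> C"
  have "C \<in> {C \<in> S. y \<in> C}" using a by blast
  moreover have "finite {C \<in> S. y \<in> C}" using a by simp
  ultimately have "card {C \<in> S. y \<in> C} > 0" by (auto simp: card_gt_0_iff)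
  then show ?thesis unfolding ld_def by simp
qed

lemma main:
  "min_unsat F \<Longrightarrow> F \<noteq> {{}} \<Longrightarrow>
   \<exists>v\<in>vars F. vdeg F v \<le> NM (nat (deficiency F)) \<and> ld F (Pos v) \<le> nat (deficiency F) \<and> ld F (Neg v) \<le> nat (deficiency F)"
proof (induction "nat (deficiency F)" arbitrary: F rule: less_induct)
  case less
  note muF = less.prems(1) and neF = less.prems(2)
  obtain S where cS: "cand F S" and mx: "\<forall>S'. cand F S' \<longrightarrow> weight S' \<le> weight S"
    using sat_exists[OF muF] by blast
  have mu: "min_unsat S" using cS unfolding cand_def by blast
  have cs: "is_clause_set S" using mu_cs[OF mu] .
  have finS: "finite S" using cs unfolding is_clause_set_def by blast
  have dS: "deficiency S = deficiency F" using cand_defi[OF cS] .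
  have vS: "vars S = vars F" using cS unfolding cand_def by blast
  define k where "k = nat (deficiency F)"
  have dk: "deficiency S = int k" unfolding k_def using dS tarsi1[OF muF] by simp
  have neS: "S \<noteq> {{}}"
  proof
    assume Se: "S = {{}}"
    then have "vars F = {}" using vS by (simp add: vars_def)
    moreover have "card F = 1" using cand_card[OF cS] Se by simp
    then obtain C where "F = {C}" using card_1_singletonE by blast
    ultimately show False using neF unfolding vars_def by auto
  qed
  have noe: "{} \<notin> S" using mu_no_empty[OF mu neS] .
  have Sne: "S \<noteq> {}" using mu_unsat[OF mu] unfolding tsat_def by blast
  have finV: "finite (vars S)" using finite_vars[OF cs] .
  have Vne: "vars S \<noteq> {}"
  proof -
    obtain C where C: "C \<in> S" using Sne by blast
    have "C \<noteq> {}"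
    proof
      assume "C = {}"
      then show False using C noe by simp
    qed
    then obtain z where "z \<in> C" by blast
    then have "var z \<in> vars S" using C unfolding vars_def by blast
    then show ?thesis by blast
  qed
  define m where "m = Min (vdeg S ` vars S)"
  have "m \<in> vdeg S ` vars S" unfolding m_def using finV Vne by (intro Min_in) auto
  then obtain v where v: "v \<in> vars S" "vdeg S v = m" by blast
  have vmin: "vdeg S v \<le> vdeg S w" if "w \<in> vars S" for w
  proof -
    have "Min (vdeg S ` vars S) \<le> vdeg S w" using finV that by (intro Min_le) auto
    then show ?thesis using v(2) unfolding m_def by simp
  qed
  define x where "x = (if ld S (Neg v) \<le> ld S (Pos v) then Pos v else Neg v)"
  define i where "i = ld S x"
  have vx: "var x = v" unfolding x_def by simp
  have ldP: "ld S (Pos v) \<le> i" and ldN: "ld S (Neg v) \<le> i" unfolding i_def x_def by auto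
  have vd_split: "vdeg S v = i + ld S (comp x)" unfolding vdeg_def i_def x_def by auto
  have vd2: "vdeg S v \<le> 2 * i" using ldP ldN unfolding vdeg_def by simp
  have ione: "i \<ge> 1"
  proof -
    obtain C z where "C \<in> S" "z \<in> C" "var z = v" using v(1) unfolding vars_def by blast
    moreover then have "z = Pos v \<or> z = Neg v" by (cases z) auto
    ultimately show ?thesis using ldP ldN ld_pos[OF finS] by (metis le_trans)
  qed
  have compx_occ: "ld S (comp x) \<ge> 1"
  proof -
    have "{C \<in> S. x \<in> C} \<noteq> {}" using ione unfolding i_def ld_def by (metis card.empty not_one_le_zero)
    then obtain C where "C \<in> S" "x \<in> C" by blast
    then obtain D where "D \<in> S" "comp x \<in> D" using mu_nopure[OF mu] by blast
    then show ?thesis using ld_pos[OF finS] by blast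
  qed
  define Kx where "Kx = {C \<in> S. x \<notin> C}"
  define \<rho> where "\<rho> = (\<lambda>C. C - {comp x})"
  define Sx where "Sx = \<rho> ` Kx"
  have cardKx: "card Kx = card S - i"
  proof -
    have "Kx = S - {C \<in> S. x \<in> C}" unfolding Kx_def by auto
    then show ?thesis unfolding i_def ld_def using finS by (simp add: card_Diff_subset)
  qed
  have ile: "i \<le> card S" unfolding i_def ld_def using finS by (intro card_mono) auto
  have inj: "inj_on \<rho> Kx"
  proof (rule inj_onI)
    fix C D assume C: "C \<in> Kx" and D: "D \<in> Kx" and eq: "\<rho> C = \<rho> D"
    show "C = D"
    proof (cases "comp x \<in> C")
      case True
      show ?thesis
      proof (cases "comp x \<in> D")
        case True
        then show ?thesis using eq \<open>comp x \<in> C\<close> unfolding \<rho>_def by (metis insert_Diff)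
      next
        case False
        then have "D \<subseteq> C" using eq unfolding \<rho>_def by blast
        then show ?thesis using mu_nosub[OF mu] C D unfolding Kx_def by blast
      qed
    next
      case False
      then have "C \<subseteq> D" using eq unfolding \<rho>_def by blast
      then show ?thesis using mu_nosub[OF mu] C D unfolding Kx_def by blast
    qed
  qed
  have cardSx: "card Sx = card S - i" unfolding Sx_def using card_image[OF inj] cardKx by simp
  have csx: "is_clause_set Sx"
    using cs unfolding Sx_def Kx_def \<rho>_def is_clause_set_def
    by (auto intro: clause_sub)
  have unsx: "\<not> tsat \<alpha> Sx" for \<alpha>
  proof
    assume a: "tsat \<alpha> Sx"
    define \<beta> where "\<beta> = \<alpha>(v := tv x)"
    have "tsat \<beta> S" unfolding tsat_def
    proof
      fix C assume C: "C \<in> S"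
      show "\<exists>z\<in>C. val \<beta> z"
      proof (cases "x \<in> C")
        case True then show ?thesis by (intro bexI[of _ x]) (auto simp: \<beta>_def val_def vx)
      next
        case False
        then have "\<rho> C \<in> Sx" using C unfolding Sx_def Kx_def by blast
        then obtain z where z: "z \<in> \<rho> C" "val \<alpha> z" using a unfolding tsat_def by blast
        have "var z \<noteq> v"
        proof
          assume "var z = v"
          then have "z = x \<or> z = comp x" using same_var vx by metis
          then show False using z(1) False unfolding \<rho>_def by blast
        qed
        then show ?thesis using z unfolding \<rho>_def \<beta>_def val_def by auto
      qed
    qed
    then show False using mu_unsat[OF mu] by blast
  qed
  have muSx: "min_unsat Sx" unfolding min_unsat_def
  proof (intro conjI ballI)
    show "is_clause_set Sx" by (rule csx)
    show "\<not> satisfiable Sx" using sat_iff[OF csx] unsx by blast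
  next
    fix D' assume "D' \<in> Sx"
    then obtain D where D: "D \<in> S" "x \<notin> D" "D' = \<rho> D" unfolding Sx_def Kx_def by blast
    have "\<exists>\<alpha>. tsat \<alpha> (S - {D}) \<and> (\<forall>z\<in>D. \<not> val \<alpha> z) \<and> val \<alpha> x"
    proof (cases "comp x \<in> D")
      case True
      obtain \<alpha> where "tsat \<alpha> (S - {D})" "\<forall>z\<in>D. \<not> val \<alpha> z" using mu_falsify[OF mu D(1)] by blast
      moreover have "val \<alpha> x" using True \<open>\<forall>z\<in>D. \<not> val \<alpha> z\<close> by (metis val_comp)
      ultimately show ?thesis by blast
    next
      case False
      have "v \<notin> var ` D"
      proof
        assume "v \<in> var ` D"
        then obtain z where "z \<in> D" "var z = v" by blast
        then show False using same_var[of z x] vx D(2) False by auto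
      qed
      then show ?thesis using saturated[OF cS mx D(1), of x] v(1) vx by auto
    qed
    then obtain \<alpha> where a: "tsat \<alpha> (S - {D})" "\<forall>z\<in>D. \<not> val \<alpha> z" "val \<alpha> x" by blast
    have "tsat \<alpha> (Sx - {D'})" unfolding tsat_def
    proof
      fix E' assume "E' \<in> Sx - {D'}"
      then obtain E where E: "E \<in> S" "x \<notin> E" "E' = \<rho> E" "E \<noteq> D"
        unfolding Sx_def Kx_def using D(3) by blast
      then obtain z where z: "z \<in> E" "val \<alpha> z" using a(1) unfolding tsat_def by blast
      then have "z \<noteq> comp x" using a(3) by auto
      then show "\<exists>z\<in>E'. val \<alpha> z" using z E(3) unfolding \<rho>_def by blast
    qed
    then show "satisfiable (Sx - {D'})" using sat_iff[OF cs_subset[OF csx, of "Sx - {D'}"]] by blast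
  qed
  have ox: "occ S w \<inter> Kx \<subseteq> Kx" for w by blast
  have card_occ_x: "card {C \<in> S. x \<in> C} = i" unfolding i_def ld_def ..
  have vSx: "vars Sx = vars S - {v}"
  proof
    show "vars Sx \<subseteq> vars S - {v}"
    proof
      fix w assume "w \<in> vars Sx"
      then obtain C z where C: "C \<in> S" "x \<notin> C" "z \<in> \<rho> C" "var z = w"
        unfolding vars_def Sx_def Kx_def by blast
      then have "w \<in> vars S" unfolding \<rho>_def vars_def by auto
      moreover have "w \<noteq> v"
      proof
        assume "w = v"
        then have "z = x \<or> z = comp x" using same_var vx C(4) by metis
        then show False using C(2,3) unfolding \<rho>_def by blast
      qed
      ultimately show "w \<in> vars S - {v}" by blast
    qed
  next
    show "vars S - {v} \<subseteq> vars Sx"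
    proof
      fix w assume w: "w \<in> vars S - {v}"
      show "w \<in> vars Sx"
      proof (rule ccontr)
        assume nw: "w \<notin> vars Sx"
        have "occ S w \<subseteq> {C \<in> S. x \<in> C}"
        proof
          fix C assume C: "C \<in> occ S w"
          show "C \<in> {C \<in> S. x \<in> C}"
          proof (rule ccontr)
            assume "C \<notin> {C \<in> S. x \<in> C}"
            then have Cx: "C \<in> S" "x \<notin> C" using C unfolding occ_def by auto
            obtain z where z: "z \<in> C" "var z = w" using C unfolding occ_def by blast
            have "z \<noteq> comp x" using z(2) w vx by auto
            then have "z \<in> \<rho> C" using z(1) unfolding \<rho>_def by blast
            then have "w \<in> vars Sx" using Cx z(2) unfolding vars_def Sx_def Kx_def by blast
            then show False using nw by blast
          qed
        qed
        moreover have "finite {C \<in> S. x \<in> C}" using finS by simp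
        ultimately have "card (occ S w) \<le> i" using card_occ_x card_mono by metis
        then have "vdeg S w \<le> i" using vdeg_occ[OF cs] by simp
        moreover have "vdeg S v \<le> vdeg S w" using vmin w by blast
        ultimately show False using vd_split compx_occ by simp
      qed
    qed
  qed
  have cardVSx: "card (vars Sx) = card (vars S) - 1" using vSx v(1) finV by simp
  have cVS: "card (vars S) \<ge> 1" using v(1) finV by (metis One_nat_def Suc_leI card_gt_0_iff empty_iff)
  have c1: "int (card Sx) = int (card S) - int i" using cardSx ile by (simp add: of_nat_diff)
  have c2: "int (card (vars Sx)) = int (card (vars S)) - 1" using cardVSx cVS by (simp add: of_nat_diff)
  have dSx: "deficiency Sx = int k - int i + 1"
    using dk c1 c2 unfolding deficiency_def by linarith
  have "deficiency Sx \<ge> 1" using tarsi1[OF muSx] .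
  then have ik: "i \<le> k" using dSx by simp
  have vdeg_rel: "vdeg S w \<le> vdeg Sx w + i" if w: "w \<in> vars S" "w \<noteq> v" for w
  proof -
    have finSx: "finite Sx" using csx unfolding is_clause_set_def by blast
    have "occ S w \<subseteq> {C \<in> S. x \<in> C} \<union> (occ S w \<inter> Kx)" unfolding occ_def Kx_def by blast
    moreover have "finite ({C \<in> S. x \<in> C} \<union> (occ S w \<inter> Kx))" using finS unfolding occ_def Kx_def by simp
    ultimately have "card (occ S w) \<le> card ({C \<in> S. x \<in> C} \<union> (occ S w \<inter> Kx))"
      by (rule card_mono[rotated])
    also have "\<dots> \<le> card {C \<in> S. x \<in> C} + card (occ S w \<inter> Kx)" by (rule card_Un_le)
    finally have "card (occ S w) \<le> card {C \<in> S. x \<in> C} + card (occ S w \<inter> Kx)" .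
    moreover have "card (occ S w \<inter> Kx) \<le> card (occ Sx w)"
    proof (rule card_inj_on_le)
      show "inj_on \<rho> (occ S w \<inter> Kx)" using inj by (rule inj_on_subset) blast
      show "\<rho> ` (occ S w \<inter> Kx) \<subseteq> occ Sx w"
      proof
        fix D assume "D \<in> \<rho> ` (occ S w \<inter> Kx)"
        then obtain C where C: "C \<in> occ S w" "C \<in> Kx" "D = \<rho> C" by blast
        obtain z where z: "z \<in> C" "var z = w" using C(1) unfolding occ_def by blast
        have "z \<noteq> comp x" using z(2) w vx by auto
        then have "z \<in> D" using z(1) C(3) unfolding \<rho>_def by blast
        moreover have "D \<in> Sx" using C unfolding Sx_def by blast
        ultimately show "D \<in> occ Sx w" using z(2) unfolding occ_def by blast
      qed
      show "finite (occ Sx w)" using finSx unfolding occ_def by simp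
    qed
    ultimately show ?thesis using vdeg_occ[OF cs] vdeg_occ[OF csx] card_occ_x by simp
  qed
  have goalS: "vdeg S v \<le> NM k"
  proof (cases "i \<le> 1")
    case True
    then show ?thesis using vd2 NM_ge2[of k] by linarith
  next
    case False
    have SxNE: "Sx \<noteq> {{}}"
    proof
      assume Se: "Sx = {{}}"
      then have "vars Sx = {}" by (simp add: vars_def)
      then have "vars S - {v} = {}" using vSx by simp
      then have "vars S = {v}" using v(1) by auto
      have "S \<subseteq> {{Pos v}, {Neg v}}"
      proof
        fix C assume C: "C \<in> S"
        have "C \<subseteq> {Pos v, Neg v}"
        proof
          fix z assume "z \<in> C"
          then have "var z = v" using C \<open>vars S = {v}\<close> unfolding vars_def by blast
          then show "z \<in> {Pos v, Neg v}" by (cases z) auto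
        qed
        note sub = this
        have ne: "C \<noteq> {}" using C noe by blast
        have nb: "\<not> (Pos v \<in> C \<and> Neg v \<in> C)"
          using clause_nocomp[OF mu_clause[OF mu C], of "Pos v"] by auto
        show "C \<in> {{Pos v}, {Neg v}}"
        proof (cases "Pos v \<in> C")
          case True
          then have "Neg v \<notin> C" using nb by blast
          then have "C \<subseteq> {Pos v}" using sub by blast
          then have "C = {Pos v}" using True by blast
          then show ?thesis by simp
        next
          case False
          then have "C \<subseteq> {Neg v}" using sub by blast
          moreover obtain z where "z \<in> C" using ne by blast
          ultimately have "C = {Neg v}" by blast
          then show ?thesis by simp
        qed
      qed
      moreover have "card {{Pos v}, {Neg v}} \<le> (2::nat)" by simp
      ultimately have "card S \<le> 2" using card_mono[of "{{Pos v}, {Neg v}}" S] by simp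
      moreover have "card Sx = 1" using Se by simp
      ultimately show False using cardSx False ile by linarith
    qed
    have dSx': "deficiency Sx = int (k - i + 1)" using dSx ik by (simp add: of_nat_diff)
    have eq: "nat (deficiency Sx) = k - i + 1" using dSx' by simp
    have "k - i + 1 < k" using False ik by linarith
    then have lt: "nat (deficiency Sx) < nat (deficiency F)" using eq unfolding k_def by simp
    obtain w where w: "w \<in> vars Sx" "vdeg Sx w \<le> NM (nat (deficiency Sx))"
      using less.hyps[OF lt muSx SxNE] by blast
    have wS: "w \<in> vars S" "w \<noteq> v" using w(1) vSx by auto
    have "vdeg S v \<le> NM (k - i + 1) + i"
      using vmin[OF wS(1)] vdeg_rel[OF wS] w(2) eq by simp
    then have "vdeg S v \<le> min (2 * i) (NM (k - i + 1) + i)" using vd2 by simp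
    also have "\<dots> \<le> NM k" using False ik by (intro NM_ge_term) auto
    finally show ?thesis .
  qed
  have "v \<in> vars F" using v(1) vS by simp
  moreover have "vdeg F v \<le> NM k" using cand_vdeg[OF cS, of v] goalS by simp
  moreover have "ld F (Pos v) \<le> k" using cand_ld[OF cS, of "Pos v"] ldP ik by simp
  moreover have "ld F (Neg v) \<le> k" using cand_ld[OF cS, of "Neg v"] ldN ik by simp
  ultimately show ?case unfolding k_def by blast
qed


theorem theorem8p3:
  fixes F :: "'v lit set set" and k :: nat
  assumes "k \<ge> 1"
    and "min_unsat F"
    and "deficiency F \<le> int k"
    and "F \<noteq> {{}}"
  shows "minvdeg F \<le> enat (NM k) \<and>
         (\<exists>v \<in> vars F. vdeg F v \<le> NM k \<and> ld F (Pos v) \<le> k \<and> ld F (Neg v) \<le> k)"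
proof -
  obtain v where v: "v \<in> vars F" "vdeg F v \<le> NM (nat (deficiency F))"
    "ld F (Pos v) \<le> nat (deficiency F)" "ld F (Neg v) \<le> nat (deficiency F)"
    using main[OF assms(2,4)] by blast
  have nk: "nat (deficiency F) \<le> k" using assms(3) by linarith
  have vd: "vdeg F v \<le> NM k" using v(2) NM_mono[OF nk] by linarith
  have fin: "finite (vars F)" using finite_vars[OF mu_cs[OF assms(2)]] .
  have vne: "vars F \<noteq> {}" using v(1) by blast
  have "Min (vdeg F ` vars F) \<le> vdeg F v" using fin v(1) by (intro Min_le) auto
  then have "Min (vdeg F ` vars F) \<le> NM k" using vd by linarith
  then have "minvdeg F \<le> enat (NM k)" unfolding minvdeg_def using vne by simp
  moreover have "ld F (Pos v) \<le> k" "ld F (Neg v) \<le> k" using v(3,4) nk by linarith+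
  ultimately show ?thesis using v(1) vd by blast
qed

end
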